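(* Let $(R,\mathfrak{m})$ be a one-dimensional local Noetherian ring and let $n$ be a positive integer. If every $\mathfrak{m}$-primary ideal of $R$ has an $n$-generated reduction, then every ideal of $R$ has an $n$-generated reduction.
   Context: A reduction of an ideal $I$ is an ideal $J\subseteq I$ such that $I^{m+1}=JI^m$ for some $m>0$; it is $n$-generated if it can be generated by $n$ elements. *)

theory Defs
  imports "HOL-Algebra.Ideal_Product" "HOL-Algebra.Ring_Divisibility"
begin

definition local_ring :: "('a, 'b) ring_scheme \<Rightarrow> 'a set \<Rightarrow> bool" where
  "local_ring R m \<longleftrightarrow> cring R \<and> maximalideal m R \<and> (\<forall>I. maximalideal I R \<longrightarrow> I = m)"

definition prime_chain :: "('a, 'b) ring_scheme \<Rightarrow> nat \<Rightarrow> bool" where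
  "prime_chain R n \<longleftrightarrow> (\<exists>P :: nat \<Rightarrow> 'a set.
      (\<forall>i \<le> n. primeideal (P i) R) \<and> (\<forall>i < n. P i \<subset> P (Suc i)))"

definition krull_dim_one :: "('a, 'b) ring_scheme \<Rightarrow> bool" where
  "krull_dim_one R \<longleftrightarrow> prime_chain R 1 \<and> \<not> prime_chain R 2"

definition ideal_radical :: "('a, 'b) ring_scheme \<Rightarrow> 'a set \<Rightarrow> 'a set" where
  "ideal_radical R I = {a \<in> carrier R. \<exists>k::nat. a [^]\<^bsub>R\<^esub> k \<in> I}"

definition primary_ideal :: "'a set \<Rightarrow> ('a, 'b) ring_scheme \<Rightarrow> bool" where
  "primary_ideal Q R \<longleftrightarrow> ideal Q R \<and> Q \<noteq> carrier R \<and>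
     (\<forall>a \<in> carrier R. \<forall>b \<in> carrier R. a \<otimes>\<^bsub>R\<^esub> b \<in> Q \<longrightarrow> a \<in> Q \<or> (\<exists>k::nat. b [^]\<^bsub>R\<^esub> k \<in> Q))"

definition primary_to :: "('a, 'b) ring_scheme \<Rightarrow> 'a set \<Rightarrow> 'a set \<Rightarrow> bool" where
  "primary_to R m Q \<longleftrightarrow> primary_ideal Q R \<and> ideal_radical R Q = m"

primrec ideal_pow :: "('a, 'b) ring_scheme \<Rightarrow> 'a set \<Rightarrow> nat \<Rightarrow> 'a set" where
  "ideal_pow R I 0 = carrier R"
| "ideal_pow R I (Suc k) = ideal_prod R I (ideal_pow R I k)"

definition is_reduction :: "('a, 'b) ring_scheme \<Rightarrow> 'a set \<Rightarrow> 'a set \<Rightarrow> bool" where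
  "is_reduction R J I \<longleftrightarrow> ideal J R \<and> J \<subseteq> I \<and>
     (\<exists>m > 0. ideal_pow R I (Suc m) = ideal_prod R J (ideal_pow R I m))"

definition n_generated :: "('a, 'b) ring_scheme \<Rightarrow> nat \<Rightarrow> 'a set \<Rightarrow> bool" where
  "n_generated R n J \<longleftrightarrow> (\<exists>A \<subseteq> carrier R. finite A \<and> card A \<le> n \<and> J = genideal R A)"

end

theory Submission
  imports Defs
begin

lemma (in noetherian_ring) noeth_max_elem:
  assumes "F \<noteq> {}" "\<And>I. I \<in> F \<Longrightarrow> ideal I R"
  shows "\<exists>M\<in>F. \<forall>N\<in>F. M \<subseteq> N \<longrightarrow> N = M"
proof (rule Zorn_Lemma2, intro ballI)
  fix C assume C: "C \<in> chains F"
  show "\<exists>U\<in>F. \<forall>X\<in>C. X \<subseteq> U"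
  proof (cases "C = {}")
    case True then show ?thesis using assms(1) by blast
  next
    case False
    have "subset.chain {I. ideal I R} C"
      using C assms(2) unfolding chains_alt_def subset.chain_def by blast
    then have "\<Union>C \<in> C" using ideal_chain_is_trivial False by blast
    then show ?thesis using C unfolding chains_def by blast
  qed
qed

context cring begin

lemma mult_set_prime:
  assumes N: "noetherian_ring R" and S: "S \<subseteq> carrier R" "\<one> \<in> S"
    "\<And>a b. a \<in> S \<Longrightarrow> b \<in> S \<Longrightarrow> a \<otimes> b \<in> S"
    and I: "ideal I R" "I \<inter> S = {}"
  shows "\<exists>P. primeideal P R \<and> I \<subseteq> P \<and> P \<inter> S = {}"
proof -
  define F where "F = {J. ideal J R \<and> I \<subseteq> J \<and> J \<inter> S = {}}"
  have "I \<in> F" using I unfolding F_def by auto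
  have Fi: "\<And>J. J \<in> F \<Longrightarrow> ideal J R" unfolding F_def by simp
  obtain P where P: "P \<in> F" and Pmax: "\<forall>N\<in>F. P \<subseteq> N \<longrightarrow> N = P"
    using noetherian_ring.noeth_max_elem[OF N _ Fi] \<open>I \<in> F\<close> by blast
  have iP: "ideal P R" and IP: "I \<subseteq> P" and PS: "P \<inter> S = {}" using P unfolding F_def by simp_all
  have big: "\<exists>p\<in>P. \<exists>r\<in>carrier R. p \<oplus> r \<otimes> a \<in> S" if a: "a \<in> carrier R" "a \<notin> P" for a
  proof -
    let ?J = "set_add R P (PIdl a)"
    have iJ: "ideal ?J R" by (rule add_ideals[OF iP cgenideal_ideal[OF a(1)]])
    have PJ: "P \<subseteq> ?J"
    proof
      fix p assume p: "p \<in> P"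
      have pc: "p \<in> carrier R" by (rule ideal.Icarr[OF iP p])
      have zin: "\<zero> \<otimes> a \<in> PIdl a" unfolding cgenideal_def using zero_closed by blast
      have "p \<oplus> \<zero> \<otimes> a \<in> ?J" unfolding set_add_def'
        by (rule UN_I[OF p], rule UN_I[OF zin], simp)
      moreover have "p \<oplus> \<zero> \<otimes> a = p" using l_null[OF a(1)] r_zero[OF pc] by simp
      ultimately show "p \<in> ?J" by simp
    qed
    have aJ: "a \<in> ?J"
    proof -
      have oin: "\<one> \<otimes> a \<in> PIdl a" unfolding cgenideal_def using one_closed by blast
      have zP: "\<zero> \<in> P" by (rule additive_subgroup.zero_closed[OF ideal.axioms(1)[OF iP]])
      have "\<zero> \<oplus> \<one> \<otimes> a \<in> ?J" unfolding set_add_def'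
        by (rule UN_I[OF zP], rule UN_I[OF oin], simp)
      moreover have "\<zero> \<oplus> \<one> \<otimes> a = a" using l_one[OF a(1)] l_zero[OF a(1)] by simp
      ultimately show "a \<in> ?J" by simp
    qed
    have "?J \<noteq> P" using aJ a by auto
    then have "?J \<notin> F" using Pmax PJ by metis
    then have "?J \<inter> S \<noteq> {}" using iJ PJ IP unfolding F_def by auto
    then obtain x where x: "x \<in> ?J" "x \<in> S" by auto
    then obtain p y where "p \<in> P" "y \<in> PIdl a" "x = p \<oplus> y"
      unfolding set_add_def' by blast
    moreover then obtain r where "r \<in> carrier R" "y = r \<otimes> a" unfolding cgenideal_def by blast
    ultimately show ?thesis using x(2) by blast
  qed
  have "primeideal P R"
  proof (rule primeidealI[OF iP is_cring])
    show "carrier R \<noteq> P" using S(2) PS by blast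
    fix a b assume ab: "a \<in> carrier R" "b \<in> carrier R" "a \<otimes> b \<in> P"
    show "a \<in> P \<or> b \<in> P"
    proof (rule ccontr)
      assume nab: "\<not> (a \<in> P \<or> b \<in> P)"
      obtain p1 r1 where h1: "p1 \<in> P" "r1 \<in> carrier R" "p1 \<oplus> r1 \<otimes> a \<in> S"
        using big[OF ab(1)] nab by blast
      obtain p2 r2 where h2: "p2 \<in> P" "r2 \<in> carrier R" "p2 \<oplus> r2 \<otimes> b \<in> S"
        using big[OF ab(2)] nab by blast
      have c1: "p1 \<in> carrier R" by (rule ideal.Icarr[OF iP h1(1)])
      have c2: "p2 \<in> carrier R" by (rule ideal.Icarr[OF iP h2(1)])
      have e1: "(p1 \<oplus> r1 \<otimes> a) \<otimes> (p2 \<oplus> r2 \<otimes> b) =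
         p1 \<otimes> (p2 \<oplus> r2 \<otimes> b) \<oplus> (r1 \<otimes> a) \<otimes> (p2 \<oplus> r2 \<otimes> b)"
        by (rule l_distr) (use c1 c2 h1 h2 ab in auto)
      have e2: "(r1 \<otimes> a) \<otimes> (p2 \<oplus> r2 \<otimes> b) = (r1 \<otimes> a) \<otimes> p2 \<oplus> (r1 \<otimes> a) \<otimes> (r2 \<otimes> b)"
        by (rule r_distr) (use c1 c2 h1 h2 ab in auto)
      have e3: "(r1 \<otimes> a) \<otimes> (r2 \<otimes> b) = (r1 \<otimes> r2) \<otimes> (a \<otimes> b)"
        using h1 h2 ab by (simp add: m_ac)
      have t1: "p1 \<otimes> (p2 \<oplus> r2 \<otimes> b) \<in> P"
        by (rule ideal.I_r_closed[OF iP h1(1)]) (use c2 h2 ab in auto)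
      have t2: "(r1 \<otimes> a) \<otimes> p2 \<in> P"
        by (rule ideal.I_l_closed[OF iP h2(1)]) (use h1 ab in auto)
      have t3: "(r1 \<otimes> r2) \<otimes> (a \<otimes> b) \<in> P"
        by (rule ideal.I_l_closed[OF iP ab(3)]) (use h1 h2 in auto)
      have ac: "\<And>u v. u \<in> P \<Longrightarrow> v \<in> P \<Longrightarrow> u \<oplus> v \<in> P"
        by (rule additive_subgroup.a_closed[OF ideal.axioms(1)[OF iP]])
      have "(p1 \<oplus> r1 \<otimes> a) \<otimes> (p2 \<oplus> r2 \<otimes> b) \<in> P"
        unfolding e1 e2 e3 by (rule ac[OF t1 ac[OF t2 t3]])
      moreover have "(p1 \<oplus> r1 \<otimes> a) \<otimes> (p2 \<oplus> r2 \<otimes> b) \<in> S" by (rule S(3)[OF h1(3) h2(3)])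
      ultimately show False using PS by blast
    qed
  qed
  then show ?thesis using IP PS by blast
qed

lemma not_rad_prime:
  assumes N: "noetherian_ring R" and I: "ideal I R" and x: "x \<in> carrier R"
    and nk: "\<And>k::nat. x [^] k \<notin> I"
  shows "\<exists>P. primeideal P R \<and> I \<subseteq> P \<and> x \<notin> P"
proof -
  let ?S = "range (\<lambda>k::nat. x [^] k)"
  have "\<exists>P. primeideal P R \<and> I \<subseteq> P \<and> P \<inter> ?S = {}"
  proof (rule mult_set_prime[OF N])
    show "?S \<subseteq> carrier R" using x by auto
    show "\<one> \<in> ?S" by (metis nat_pow_0 rangeI)
    fix a b assume "a \<in> ?S" "b \<in> ?S"
    then obtain i j where "a = x [^] (i::nat)" "b = x [^] (j::nat)" by blast
    then have "a \<otimes> b = x [^] (i + j)" using x by (simp add: nat_pow_mult)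
    then show "a \<otimes> b \<in> ?S" by (metis rangeI)
  next
    show "ideal I R" by (rule I)
    show "I \<inter> ?S = {}" using nk by blast
  qed
  then obtain P where P: "primeideal P R" "I \<subseteq> P" "P \<inter> ?S = {}" by blast
  have "x = x [^] (1::nat)" using x by simp
  then have "x \<in> ?S" by (metis rangeI)
  then show ?thesis using P by blast
qed

lemma exists_max_above:
  assumes N: "noetherian_ring R" and I: "ideal I R" "I \<noteq> carrier R"
  shows "\<exists>M. maximalideal M R \<and> I \<subseteq> M"
proof -
  define F where "F = {J. ideal J R \<and> I \<subseteq> J \<and> J \<noteq> carrier R}"
  have "I \<in> F" using I unfolding F_def by simp
  have Fi: "\<And>J. J \<in> F \<Longrightarrow> ideal J R" unfolding F_def by simp
  obtain M where M: "M \<in> F" and Mmax: "\<forall>N\<in>F. M \<subseteq> N \<longrightarrow> N = M"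
    using noetherian_ring.noeth_max_elem[OF N _ Fi] \<open>I \<in> F\<close> by blast
  have Mp: "ideal M R" "carrier R \<noteq> M" "I \<subseteq> M" using M unfolding F_def by auto
  have "maximalideal M R"
  proof (rule maximalidealI[OF Mp(1) Mp(2)])
    fix J assume J: "ideal J R" "M \<subseteq> J" "J \<subseteq> carrier R"
    show "J = M \<or> J = carrier R"
    proof (cases "J = carrier R")
      case False
      then have "J \<in> F" using J Mp unfolding F_def by simp
      then show ?thesis using Mmax J(2) by blast
    qed simp
  qed
  then show ?thesis using Mp(3) by blast
qed

lemma minimal_prime_elem:
  assumes N: "noetherian_ring R" and P: "primeideal P R"
    and Pmin: "\<And>Q. primeideal Q R \<Longrightarrow> Q \<subseteq> P \<Longrightarrow> Q = P"
    and x: "x \<in> P"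
  shows "\<exists>s\<in>carrier R - P. \<exists>k::nat. s \<otimes> x [^] k = \<zero>"
proof (rule ccontr)
  assume H: "\<not> ?thesis"
  have iP: "ideal P R" by (rule primeideal.axioms(1)[OF P])
  have xc: "x \<in> carrier R" by (rule ideal.Icarr[OF iP x])
  define S where "S = {s \<otimes> x [^] (k::nat) | s k. s \<in> carrier R - P}"
  have Sin: "\<And>s k. s \<in> carrier R - P \<Longrightarrow> s \<otimes> x [^] (k::nat) \<in> S" unfolding S_def by blast
  have one: "\<one> \<notin> P"
  proof
    assume "\<one> \<in> P"
    then have "P = carrier R" by (rule ideal.one_imp_carrier[OF iP])
    then show False using primeideal.I_notcarr[OF P] by simp
  qed
  have z: "\<zero> \<notin> S"
  proof
    assume "\<zero> \<in> S"
    then obtain s k where sk: "s \<in> carrier R - P" "\<zero> = s \<otimes> x [^] (k::nat)" unfolding S_def by blast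
    have "s \<otimes> x [^] k = \<zero>" using sk(2) by (rule sym)
    then show False using H sk(1) by blast
  qed
  have "\<exists>Q. primeideal Q R \<and> {\<zero>} \<subseteq> Q \<and> Q \<inter> S = {}"
  proof (rule mult_set_prime[OF N])
    show "S \<subseteq> carrier R"
    proof
      fix y assume "y \<in> S"
      then obtain s k where "s \<in> carrier R - P" "y = s \<otimes> x [^] (k::nat)" unfolding S_def by blast
      then show "y \<in> carrier R" using xc by simp
    qed
    have "\<one> = \<one> \<otimes> x [^] (0::nat)" by simp
    moreover have "\<one> \<in> carrier R - P" using one by simp
    ultimately show "\<one> \<in> S" using Sin by metis
    fix a b assume "a \<in> S" "b \<in> S"
    then obtain s k t l where st: "s \<in> carrier R - P" "t \<in> carrier R - P" "a = s \<otimes> x [^] (k::nat)" "b = t \<otimes> x [^] (l::nat)"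
      unfolding S_def by blast
    have sc: "s \<in> carrier R" "t \<in> carrier R" using st by auto
    have "s \<otimes> t \<notin> P" using primeideal.I_prime[OF P sc] st by blast
    then have stP: "s \<otimes> t \<in> carrier R - P" using sc by simp
    have "a \<otimes> b = (s \<otimes> t) \<otimes> (x [^] k \<otimes> x [^] l)" using st sc xc by (simp add: m_ac)
    also have "\<dots> = (s \<otimes> t) \<otimes> x [^] (k + l)" using xc by (simp add: nat_pow_mult)
    finally show "a \<otimes> b \<in> S" using Sin[OF stP] by simp
  next
    show "ideal {\<zero>} R" by (rule zeroideal)
    show "{\<zero>} \<inter> S = {}" using z by blast
  qed
  then obtain Q where Q: "primeideal Q R" "Q \<inter> S = {}" by blast
  have iQ: "ideal Q R" by (rule primeideal.axioms(1)[OF Q(1)])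
  have "Q \<subseteq> P"
  proof
    fix q assume q: "q \<in> Q"
    have qc: "q \<in> carrier R" by (rule ideal.Icarr[OF iQ q])
    show "q \<in> P"
    proof (rule ccontr)
      assume "q \<notin> P"
      then have "q \<in> carrier R - P" using qc by simp
      then have "q \<otimes> x [^] (0::nat) \<in> S" by (rule Sin)
      moreover have "q \<otimes> x [^] (0::nat) = q" using qc by simp
      ultimately have "q \<in> S" by simp
      then show False using Q(2) q by (simp add: disjoint_iff)
    qed
  qed
  moreover have "x \<notin> Q"
  proof
    assume xQ: "x \<in> Q"
    have "\<one> \<in> carrier R - P" using one by simp
    then have "\<one> \<otimes> x [^] (1::nat) \<in> S" by (rule Sin)
    moreover have "\<one> \<otimes> x [^] (1::nat) = x" using xc by simp
    ultimately have "x \<in> S" by simp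
    then show False using Q(2) xQ by (simp add: disjoint_iff)
  qed
  ultimately show False using Pmin[OF Q(1)] x by simp
qed

end

context cring begin

lemma ipow_ideal: "ideal I R \<Longrightarrow> ideal (ideal_pow R I k) R"
  by (induct k) (simp_all add: oneideal ideal_prod_is_ideal)

lemma ipow_carr: "ideal I R \<Longrightarrow> ideal_pow R I k \<subseteq> carrier R"
  by (rule subsetI, rule ideal.Icarr[OF ipow_ideal])

lemma iprod_mono_r:
  assumes sub: "J \<subseteq> J'"
  shows "ideal_prod R I J \<subseteq> ideal_prod R I J'"
proof
  fix s assume "s \<in> ideal_prod R I J"
  then show "s \<in> ideal_prod R I J'"
  proof (induct s rule: ideal_prod.induct)
    case (prod i j) then show ?case using sub by (blast intro: ideal_prod.prod)
  next
    case (sum s1 s2) show ?case by (rule ideal_prod.sum[OF sum(2) sum(4)])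
  qed
qed

lemma iprod_mono_l:
  assumes sub: "I \<subseteq> I'"
  shows "ideal_prod R I J \<subseteq> ideal_prod R I' J"
proof
  fix s assume "s \<in> ideal_prod R I J"
  then show "s \<in> ideal_prod R I' J"
  proof (induct s rule: ideal_prod.induct)
    case (prod i j) then show ?case using sub by (blast intro: ideal_prod.prod)
  next
    case (sum s1 s2) show ?case by (rule ideal_prod.sum[OF sum(2) sum(4)])
  qed
qed

lemma iprod_zero:
  assumes "\<And>i k. i \<in> A \<Longrightarrow> k \<in> B \<Longrightarrow> i \<otimes> k = \<zero>"
  shows "ideal_prod R A B \<subseteq> {\<zero>}"
proof
  fix s assume s: "s \<in> ideal_prod R A B"
  show "s \<in> {\<zero>}" using s
  proof (induct s rule: ideal_prod.induct)
    case (prod i j) then show ?case using assms by simp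
  next
    case (sum s1 s2) then show ?case by simp
  qed
qed

lemma carrier_prod: "ideal I R \<Longrightarrow> ideal_prod R (carrier R) I = I"
  using ideal_prod_commute[OF oneideal, of I] ideal_prod_one[of I] by simp

lemma ipow_add:
  assumes "ideal I R"
  shows "ideal_pow R I (a + b) = ideal_prod R (ideal_pow R I a) (ideal_pow R I b)"
proof (induct a)
  case 0 show ?case using carrier_prod[OF ipow_ideal[OF assms]] by simp
next
  case (Suc a)
  have "ideal_pow R I (Suc a + b) = ideal_prod R I (ideal_pow R I (a + b))" by simp
  also have "\<dots> = ideal_prod R I (ideal_prod R (ideal_pow R I a) (ideal_pow R I b))"
    using Suc by simp
  also have "\<dots> = ideal_prod R (ideal_prod R I (ideal_pow R I a)) (ideal_pow R I b)"
    using ideal_prod_assoc[OF assms ipow_ideal[OF assms] ipow_ideal[OF assms]] by simp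
  finally show ?case by simp
qed

lemma ipow_Suc_sub: "ideal I R \<Longrightarrow> ideal_pow R I (Suc k) \<subseteq> ideal_pow R I k"
  using ideal_prod_inter[of I "ideal_pow R I k"] ipow_ideal[of I k] by auto

lemma ipow_le_sub:
  assumes "ideal I R" "k \<le> l"
  shows "ideal_pow R I l \<subseteq> ideal_pow R I k"
  using assms(2)
proof (induct l)
  case 0 then show ?case by simp
next
  case (Suc l)
  show ?case
  proof (cases "k = Suc l")
    case False
    then have "k \<le> l" using Suc by simp
    then show ?thesis using Suc(1) ipow_Suc_sub[OF assms(1), of l] by blast
  qed simp
qed

lemma ipow_mono_ideal:
  assumes "I \<subseteq> I'"
  shows "ideal_pow R I k \<subseteq> ideal_pow R I' k"
proof (induct k)
  case (Suc k)
  have "ideal_prod R I (ideal_pow R I k) \<subseteq> ideal_prod R I' (ideal_pow R I k)"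
    by (rule iprod_mono_l[OF assms])
  also have "\<dots> \<subseteq> ideal_prod R I' (ideal_pow R I' k)"
    by (rule iprod_mono_r[OF Suc])
  finally show ?case by simp
qed simp

lemma sadd_sub:
  assumes "ideal X R" "A \<subseteq> X" "B \<subseteq> X"
  shows "set_add R A B \<subseteq> X"
proof
  fix z assume "z \<in> set_add R A B"
  then obtain a b where "a \<in> A" "b \<in> B" "z = a \<oplus> b" unfolding set_add_def' by blast
  then show "z \<in> X" using assms additive_subgroup.a_closed[OF ideal.axioms(1)[OF assms(1)]]
    by blast
qed

lemma sadd_mono:
  assumes "A \<subseteq> A'" "B \<subseteq> B'"
  shows "set_add R A B \<subseteq> set_add R A' B'"
  using assms unfolding set_add_def' by blast

lemma sadd_upper:
  assumes "ideal X R" "ideal Y R"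
  shows "X \<subseteq> set_add R X Y" "Y \<subseteq> set_add R X Y"
proof -
  have c: "X \<union> Y \<subseteq> carrier R"
    using ideal.Icarr[OF assms(1)] ideal.Icarr[OF assms(2)] by (rule Un_least[OF subsetI subsetI])
  have "X \<union> Y \<subseteq> set_add R X Y"
    using genideal_self[OF c] union_genideal[OF assms] by simp
  then show "X \<subseteq> set_add R X Y" "Y \<subseteq> set_add R X Y" by auto
qed

lemma binom_pow:
  assumes J: "ideal J R" and L: "ideal L R"
  shows "ideal_pow R (set_add R J L) (u + v) \<subseteq> set_add R (ideal_pow R J u) (ideal_pow R L v)"
proof -
  have JL: "ideal (set_add R J L) R" by (rule add_ideals[OF J L])
  have "\<forall>u v. u + v = n \<longrightarrow> ideal_pow R (set_add R J L) (u + v) \<subseteq> set_add R (ideal_pow R J u) (ideal_pow R L v)" for n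
  proof (induct n)
    case 0
    show ?case
    proof (intro allI impI)
      fix u v :: nat assume "u + v = 0"
      then have "u = 0" "v = 0" by auto
      then show "ideal_pow R (set_add R J L) (u + v) \<subseteq> set_add R (ideal_pow R J u) (ideal_pow R L v)"
        using sadd_upper(1)[OF oneideal oneideal] by simp
    qed
  next
    case (Suc n)
    show ?case
    proof (intro allI impI)
      fix u v :: nat assume uv: "u + v = Suc n"
      let ?X = "ideal_pow R (set_add R J L) (u + v)"
      let ?T = "set_add R (ideal_pow R J u) (ideal_pow R L v)"
      have Ti: "ideal ?T R" by (rule add_ideals[OF ipow_ideal[OF J] ipow_ideal[OF L]])
      have Xc: "?X \<subseteq> carrier R" by (rule ipow_carr[OF JL])
      show "?X \<subseteq> ?T"
      proof (cases "u = 0 \<or> v = 0")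
        case True
        then show ?thesis
        proof
          assume "u = 0"
          then show ?thesis using Xc sadd_upper(1)[OF oneideal ipow_ideal[OF L], of v] by simp
        next
          assume "v = 0"
          then show ?thesis using Xc sadd_upper(2)[OF ipow_ideal[OF J] oneideal, of u] by simp
        qed
      next
        case False
        then obtain u' v' where u': "u = Suc u'" and v': "v = Suc v'" by (metis not0_implies_Suc)
        let ?Y = "ideal_pow R (set_add R J L) n"
        have Yi: "ideal ?Y R" by (rule ipow_ideal[OF JL])
        have X: "?X = set_add R (ideal_prod R J ?Y) (ideal_prod R L ?Y)"
          using uv ideal_prod_distr(2)[OF Yi J L] by simp
        have IH1: "?Y \<subseteq> set_add R (ideal_pow R J u') (ideal_pow R L v)"
          using Suc[rule_format, of u' v] uv u' by simp
        have IH2: "?Y \<subseteq> set_add R (ideal_pow R J u) (ideal_pow R L v')"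
          using Suc[rule_format, of u v'] uv v' by simp
        have "ideal_prod R J ?Y \<subseteq> ideal_prod R J (set_add R (ideal_pow R J u') (ideal_pow R L v))"
          by (rule iprod_mono_r[OF IH1])
        also have "\<dots> = set_add R (ideal_prod R J (ideal_pow R J u')) (ideal_prod R J (ideal_pow R L v))"
          by (rule ideal_prod_distr(1)[OF J ipow_ideal[OF J] ipow_ideal[OF L]])
        also have "\<dots> \<subseteq> ?T"
        proof (rule sadd_mono)
          show "ideal_prod R J (ideal_pow R J u') \<subseteq> ideal_pow R J u" using u' by simp
          show "ideal_prod R J (ideal_pow R L v) \<subseteq> ideal_pow R L v"
            using ideal_prod_inter[OF J ipow_ideal[OF L]] by blast
        qed
        finally have A1: "ideal_prod R J ?Y \<subseteq> ?T" .
        have "ideal_prod R L ?Y \<subseteq> ideal_prod R L (set_add R (ideal_pow R J u) (ideal_pow R L v'))"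
          by (rule iprod_mono_r[OF IH2])
        also have "\<dots> = set_add R (ideal_prod R L (ideal_pow R J u)) (ideal_prod R L (ideal_pow R L v'))"
          by (rule ideal_prod_distr(1)[OF L ipow_ideal[OF J] ipow_ideal[OF L]])
        also have "\<dots> \<subseteq> ?T"
        proof (rule sadd_mono)
          show "ideal_prod R L (ideal_pow R L v') \<subseteq> ideal_pow R L v" using v' by simp
          show "ideal_prod R L (ideal_pow R J u) \<subseteq> ideal_pow R J u"
            using ideal_prod_inter[OF L ipow_ideal[OF J]] by blast
        qed
        finally have A2: "ideal_prod R L ?Y \<subseteq> ?T" .
        show ?thesis unfolding X by (rule sadd_sub[OF Ti A1 A2])
      qed
    qed
  qed
  then show ?thesis by blast
qed

lemma sum_pow:
  assumes I: "ideal I R" and K: "ideal K R"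
  shows "ideal_pow R (set_add R I K) s \<subseteq> set_add R (ideal_pow R I s) K"
proof (induct s)
  case 0 then show ?case using sadd_upper(1)[OF oneideal K] by simp
next
  case (Suc s)
  let ?Y = "ideal_pow R (set_add R I K) s"
  let ?T = "set_add R (ideal_pow R I (Suc s)) K"
  have IK: "ideal (set_add R I K) R" by (rule add_ideals[OF I K])
  have Yi: "ideal ?Y R" by (rule ipow_ideal[OF IK])
  have Ti: "ideal ?T R" by (rule add_ideals[OF ipow_ideal[OF I] K])
  have X: "ideal_pow R (set_add R I K) (Suc s) = set_add R (ideal_prod R I ?Y) (ideal_prod R K ?Y)"
    using ideal_prod_distr(2)[OF Yi I K] by simp
  have "ideal_prod R I ?Y \<subseteq> ideal_prod R I (set_add R (ideal_pow R I s) K)"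
    by (rule iprod_mono_r[OF Suc])
  also have "\<dots> = set_add R (ideal_prod R I (ideal_pow R I s)) (ideal_prod R I K)"
    by (rule ideal_prod_distr(1)[OF I ipow_ideal[OF I] K])
  also have "\<dots> \<subseteq> ?T"
  proof (rule sadd_mono)
    show "ideal_prod R I (ideal_pow R I s) \<subseteq> ideal_pow R I (Suc s)" by simp
    show "ideal_prod R I K \<subseteq> K" using ideal_prod_inter[OF I K] by blast
  qed
  finally have A1: "ideal_prod R I ?Y \<subseteq> ?T" .
  have "ideal_prod R K ?Y \<subseteq> K" using ideal_prod_inter[OF K Yi] by blast
  also have "K \<subseteq> ?T" by (rule sadd_upper(2)[OF ipow_ideal[OF I] K])
  finally have A2: "ideal_prod R K ?Y \<subseteq> ?T" .
  show ?case unfolding X by (rule sadd_sub[OF Ti A1 A2])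
qed

lemma pidl_pow:
  assumes a: "a \<in> carrier R"
  shows "ideal_pow R (PIdl a) v \<subseteq> PIdl (a [^] v)"
proof (induct v)
  case 0
  show ?case
  proof
    fix x assume "x \<in> ideal_pow R (PIdl a) 0"
    then have x: "x \<in> carrier R" by simp
    then have "x = x \<otimes> a [^] (0::nat)" by simp
    then show "x \<in> PIdl (a [^] (0::nat))" unfolding cgenideal_def using x by blast
  qed
next
  case (Suc v)
  have pi: "ideal (PIdl (a [^] Suc v)) R" by (rule cgenideal_ideal) (use a in simp)
  have "ideal_prod R (PIdl a) (ideal_pow R (PIdl a) v) \<subseteq> ideal_prod R (PIdl a) (PIdl (a [^] v))"
    by (rule iprod_mono_r[OF Suc])
  also have "\<dots> \<subseteq> PIdl (a [^] Suc v)"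
  proof
    fix s assume s: "s \<in> ideal_prod R (PIdl a) (PIdl (a [^] v))"
    show "s \<in> PIdl (a [^] Suc v)" using s
    proof (induct s rule: ideal_prod.induct)
      case (prod i j)
      obtain r where r: "r \<in> carrier R" "i = r \<otimes> a" using prod(1) unfolding cgenideal_def by blast
      obtain t where t: "t \<in> carrier R" "j = t \<otimes> a [^] v" using prod(2) unfolding cgenideal_def by blast
      have "i \<otimes> j = (r \<otimes> t) \<otimes> a [^] Suc v" using r t a by (simp add: m_ac)
      moreover have "r \<otimes> t \<in> carrier R" using r t by simp
      ultimately show ?case unfolding cgenideal_def by blast
    next
      case (sum s1 s2)
      then show ?case using additive_subgroup.a_closed[OF ideal.axioms(1)[OF pi]] by blast
    qed
  qed
  finally show ?case by simp
qed

end

context cring begin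

definition annih :: "'a set \<Rightarrow> 'a set" where
  "annih J = {r \<in> carrier R. \<forall>z\<in>J. r \<otimes> z = \<zero>}"

lemma annih_ideal:
  assumes J: "J \<subseteq> carrier R"
  shows "ideal (annih J) R"
proof (rule idealI[OF ring_axioms])
  show "subgroup (annih J) (add_monoid R)"
  proof (rule add.subgroupI)
    show "annih J \<subseteq> carrier R" unfolding annih_def by auto
    have "\<zero> \<in> annih J" unfolding annih_def using J by auto
    then show "annih J \<noteq> {}" by blast
    fix a assume a: "a \<in> annih J"
    have ac: "a \<in> carrier R" using a unfolding annih_def by simp
    have "\<forall>z\<in>J. (\<ominus> a) \<otimes> z = \<zero>"
    proof
      fix z assume z: "z \<in> J"
      have zc: "z \<in> carrier R" using z J by blast
      have "(\<ominus> a) \<otimes> z = \<ominus> (a \<otimes> z)" by (rule l_minus[OF ac zc])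
      also have "a \<otimes> z = \<zero>" using a z unfolding annih_def by simp
      finally show "(\<ominus> a) \<otimes> z = \<zero>" by simp
    qed
    then have "\<ominus> a \<in> annih J" unfolding annih_def using ac by simp
    then show "\<ominus> a \<in> annih J" .
  next
    fix a b assume a: "a \<in> annih J" and b: "b \<in> annih J"
    have ac: "a \<in> carrier R" "b \<in> carrier R" using a b unfolding annih_def by simp_all
    have "\<forall>z\<in>J. (a \<oplus> b) \<otimes> z = \<zero>"
    proof
      fix z assume z: "z \<in> J"
      have zc: "z \<in> carrier R" using z J by blast
      have "(a \<oplus> b) \<otimes> z = a \<otimes> z \<oplus> b \<otimes> z" by (rule l_distr[OF ac zc])
      also have "a \<otimes> z = \<zero>" using a z unfolding annih_def by simp
      also have "b \<otimes> z = \<zero>" using b z unfolding annih_def by simp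
      finally show "(a \<oplus> b) \<otimes> z = \<zero>" by simp
    qed
    then show "a \<oplus> b \<in> annih J" unfolding annih_def using ac by simp
  qed
next
  fix a x assume a: "a \<in> annih J" and x: "x \<in> carrier R"
  have ac: "a \<in> carrier R" using a unfolding annih_def by simp
  have h: "\<forall>z\<in>J. (x \<otimes> a) \<otimes> z = \<zero>"
  proof
    fix z assume z: "z \<in> J"
    have zc: "z \<in> carrier R" using z J by blast
    have "(x \<otimes> a) \<otimes> z = x \<otimes> (a \<otimes> z)" by (rule m_assoc[OF x ac zc])
    also have "a \<otimes> z = \<zero>" using a z unfolding annih_def by simp
    finally show "(x \<otimes> a) \<otimes> z = \<zero>" using x by simp
  qed
  then show "x \<otimes> a \<in> annih J" unfolding annih_def using ac x by simp
  have "a \<otimes> x = x \<otimes> a" by (rule m_comm[OF ac x])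
  then show "a \<otimes> x \<in> annih J" using h unfolding annih_def using ac x by simp
qed

lemma prime_one_notin: "primeideal P R \<Longrightarrow> \<one> \<notin> P"
proof
  assume P: "primeideal P R" and o: "\<one> \<in> P"
  have "P = carrier R" by (rule ideal.one_imp_carrier[OF primeideal.axioms(1)[OF P] o])
  then show False using primeideal.I_notcarr[OF P] by simp
qed

lemma pow_annih:
  assumes N: "noetherian_ring R" and P: "primeideal P R"
    and Pmin: "\<And>Q. primeideal Q R \<Longrightarrow> Q \<subseteq> P \<Longrightarrow> Q = P"
    and fin: "finite A" and AP: "A \<subseteq> P"
  shows "\<exists>s\<in>carrier R - P. \<exists>t. \<forall>z\<in>ideal_pow R (Idl A) t. s \<otimes> z = \<zero>"
  using fin AP
proof (induct A rule: finite_induct)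
  case empty
  have i0: "ideal (Idl {}) R" by (rule genideal_ideal) simp
  have "ideal_pow R (Idl {}) 1 = Idl {}" using ideal_prod_one[OF i0] by simp
  also have "\<dots> \<subseteq> {\<zero>}" by (rule genideal_minimal[OF zeroideal]) simp
  finally have "\<forall>z\<in>ideal_pow R (Idl {}) 1. \<one> \<otimes> z = \<zero>" by auto
  moreover have "\<one> \<in> carrier R - P" using prime_one_notin[OF P] by simp
  ultimately show ?case by blast
next
  case (insert a A)
  have iP: "ideal P R" by (rule primeideal.axioms(1)[OF P])
  have aP: "a \<in> P" and AP': "A \<subseteq> P" using insert by auto
  have ac: "a \<in> carrier R" by (rule ideal.Icarr[OF iP aP])
  have Ac: "A \<subseteq> carrier R" using AP' ideal.Icarr[OF iP] by (rule subset_trans[OF _ subsetI])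
  obtain s1 t1 where s1: "s1 \<in> carrier R - P" "\<forall>z\<in>ideal_pow R (Idl A) t1. s1 \<otimes> z = \<zero>"
    using insert(3)[OF AP'] by blast
  obtain s2 k where s2: "s2 \<in> carrier R - P" "s2 \<otimes> a [^] (k::nat) = \<zero>"
    using minimal_prime_elem[OF N P Pmin aP] by blast
  let ?B = "Idl A" and ?L = "PIdl a"
  have iB: "ideal ?B R" by (rule genideal_ideal[OF Ac])
  have iL: "ideal ?L R" by (rule cgenideal_ideal[OF ac])
  have iBL: "ideal (set_add R ?B ?L) R" by (rule add_ideals[OF iB iL])
  have "insert a A \<subseteq> set_add R ?B ?L"
  proof (rule insert_subsetI)
    show "a \<in> set_add R ?B ?L" using cgenideal_self[OF ac] sadd_upper(2)[OF iB iL] by (rule subsetD[rotated])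
    show "A \<subseteq> set_add R ?B ?L" using genideal_self[OF Ac] sadd_upper(1)[OF iB iL] by (rule subset_trans)
  qed
  then have sub: "Idl (insert a A) \<subseteq> set_add R ?B ?L" by (rule genideal_minimal[OF iBL])
  have "ideal_pow R (Idl (insert a A)) (t1 + k) \<subseteq> ideal_pow R (set_add R ?B ?L) (t1 + k)"
    by (rule ipow_mono_ideal[OF sub])
  also have "\<dots> \<subseteq> set_add R (ideal_pow R ?B t1) (ideal_pow R ?L k)"
    by (rule binom_pow[OF iB iL])
  also have "\<dots> \<subseteq> set_add R (ideal_pow R ?B t1) (PIdl (a [^] k))"
    by (rule sadd_mono[OF subset_refl pidl_pow[OF ac]])
  finally have sub2: "ideal_pow R (Idl (insert a A)) (t1 + k) \<subseteq> set_add R (ideal_pow R ?B t1) (PIdl (a [^] k))" .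
  have s12: "s1 \<otimes> s2 \<in> carrier R - P"
  proof -
    have c: "s1 \<in> carrier R" "s2 \<in> carrier R" using s1 s2 by auto
    have "s1 \<otimes> s2 \<notin> P" using primeideal.I_prime[OF P c] s1 s2 by blast
    then show ?thesis using c by simp
  qed
  have "\<forall>z\<in>ideal_pow R (Idl (insert a A)) (t1 + k). (s1 \<otimes> s2) \<otimes> z = \<zero>"
  proof
    fix z assume "z \<in> ideal_pow R (Idl (insert a A)) (t1 + k)"
    then have "z \<in> set_add R (ideal_pow R ?B t1) (PIdl (a [^] k))" using sub2 by (rule subsetD[rotated])
    then obtain z1 z2 where z: "z1 \<in> ideal_pow R ?B t1" "z2 \<in> PIdl (a [^] k)" "z = z1 \<oplus> z2"
      unfolding set_add_def' by blast
    obtain r where r: "r \<in> carrier R" "z2 = r \<otimes> a [^] k" using z(2) unfolding cgenideal_def by blast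
    have c: "s1 \<in> carrier R" "s2 \<in> carrier R" using s1 s2 by auto
    have z1c: "z1 \<in> carrier R" using z(1) ipow_carr[OF iB] by (rule subsetD[rotated])
    have akc: "a [^] k \<in> carrier R" using ac by simp
    have e1: "(s1 \<otimes> s2) \<otimes> z1 = s2 \<otimes> (s1 \<otimes> z1)" using c z1c by (simp add: m_ac)
    have e2: "s1 \<otimes> z1 = \<zero>" using s1(2) z(1) by blast
    have e3: "(s1 \<otimes> s2) \<otimes> (r \<otimes> a [^] k) = (s1 \<otimes> r) \<otimes> (s2 \<otimes> a [^] k)" using c r(1) akc by (simp add: m_ac)
    have "(s1 \<otimes> s2) \<otimes> z = (s1 \<otimes> s2) \<otimes> z1 \<oplus> (s1 \<otimes> s2) \<otimes> (r \<otimes> a [^] k)"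
      unfolding z(3) r(2) using c z1c r(1) akc by (simp add: r_distr)
    also have "\<dots> = \<zero>" unfolding e1 e2 e3 s2(2) using c r(1) by simp
    finally show "(s1 \<otimes> s2) \<otimes> z = \<zero>" .
  qed
  then show ?case using s12 by blast
qed

end

context cring begin

lemma prime_pow:
  assumes P: "primeideal P R" and x: "x \<in> carrier R"
  shows "x [^] (k::nat) \<in> P \<Longrightarrow> x \<in> P"
proof (induct k)
  case 0 then show ?case using prime_one_notin[OF P] by simp
next
  case (Suc k)
  then have "x [^] k \<otimes> x \<in> P" by simp
  then have "x [^] k \<in> P \<or> x \<in> P" using primeideal.I_prime[OF P] x by simp
  then show ?case using Suc(1) by blast
qed

lemma annih_anti: "J1 \<subseteq> J2 \<Longrightarrow> annih J2 \<subseteq> annih J1"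
  unfolding annih_def by blast

lemma main_reduction:
  assumes N: "noetherian_ring R" and lr: "local_ring R m" and kd: "krull_dim_one R"
    and n: "n > 0"
    and hyp: "\<forall>Q. primary_to R m Q \<longrightarrow> (\<exists>J. n_generated R n J \<and> is_reduction R J Q)"
    and I: "ideal I R"
  shows "\<exists>J. n_generated R n J \<and> is_reduction R J I"
proof -
  have mmax: "maximalideal m R" and muniq: "\<And>M. maximalideal M R \<Longrightarrow> M = m"
    using lr unfolding local_ring_def by auto
  have mprime: "primeideal m R" by (rule maximalideal_prime[OF mmax])
  have im: "ideal m R" by (rule maximalideal.axioms(1)[OF mmax])
  have below_m: "\<And>J. ideal J R \<Longrightarrow> J \<noteq> carrier R \<Longrightarrow> J \<subseteq> m"
  proof -
    fix J assume "ideal J R" "J \<noteq> carrier R"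
    then obtain M where "maximalideal M R" "J \<subseteq> M" using exists_max_above[OF N] by blast
    then show "J \<subseteq> m" using muniq by blast
  qed
  obtain A0 where A0: "A0 \<subseteq> carrier R" "finite A0" "I = Idl A0"
    using noetherian_ring.finetely_gen[OF N I] by blast
  have A0I: "A0 \<subseteq> I" using genideal_self[OF A0(1)] A0(3) by simp
  have Ic: "I \<subseteq> carrier R" using ideal.Icarr[OF I] by (rule subsetI)
  define F where "F = range (\<lambda>t. annih (ideal_pow R I t))"
  have Fi: "\<And>X. X \<in> F \<Longrightarrow> ideal X R" unfolding F_def using annih_ideal ipow_carr[OF I] by blast
  have "F \<noteq> {}" unfolding F_def by simp
  then obtain X where X: "X \<in> F" and Xmax: "\<forall>Y\<in>F. X \<subseteq> Y \<longrightarrow> Y = X"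
    using noetherian_ring.noeth_max_elem[OF N _ Fi] by blast
  then obtain u where u: "X = annih (ideal_pow R I u)" unfolding F_def by blast
  define K where "K = annih (ideal_pow R I u)"
  have iK: "ideal K R" unfolding K_def by (rule annih_ideal[OF ipow_carr[OF I]])
  have Kbig: "\<And>t. annih (ideal_pow R I t) \<subseteq> K"
  proof -
    fix t
    show "annih (ideal_pow R I t) \<subseteq> K"
    proof (cases "t \<le> u")
      case True
      then show ?thesis unfolding K_def by (rule annih_anti[OF ipow_le_sub[OF I]])
    next
      case False
      then have "u \<le> t" by simp
      then have "X \<subseteq> annih (ideal_pow R I t)" unfolding u by (rule annih_anti[OF ipow_le_sub[OF I]])
      moreover have "annih (ideal_pow R I t) \<in> F" unfolding F_def by simp
      ultimately have "annih (ideal_pow R I t) = X" using Xmax by blast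
      then show ?thesis unfolding K_def u by simp
    qed
  qed
  define Q where "Q = set_add R I K"
  have iQ: "ideal Q R" unfolding Q_def by (rule add_ideals[OF I iK])
  have IQ: "I \<subseteq> Q" unfolding Q_def by (rule sadd_upper(1)[OF I iK])
  have KQ: "K \<subseteq> Q" unfolding Q_def by (rule sadd_upper(2)[OF I iK])
  have "\<exists>J. n_generated R n J \<and> is_reduction R J Q"
  proof (cases "Q = carrier R")
    case True
    have "n_generated R n Q" unfolding n_generated_def
      using True genideal_one n by (intro exI[of _ "{\<one>}"]) simp
    moreover have "is_reduction R Q Q" unfolding is_reduction_def
      using iQ by (intro conjI exI[of _ "1::nat"]) simp_all
    ultimately show ?thesis by blast
  next
    case False
    have Qm: "Q \<subseteq> m" by (rule below_m[OF iQ False])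
    have rad: "\<exists>k::nat. x [^] k \<in> Q" if x: "x \<in> m" for x
    proof (rule ccontr)
      assume nk: "\<not> (\<exists>k::nat. x [^] k \<in> Q)"
      have xc: "x \<in> carrier R" by (rule ideal.Icarr[OF im x])
      obtain P where P: "primeideal P R" "Q \<subseteq> P" "x \<notin> P"
        using not_rad_prime[OF N iQ xc] nk by blast
      have iP: "ideal P R" by (rule primeideal.axioms(1)[OF P(1)])
      have PnC: "P \<noteq> carrier R" using primeideal.I_notcarr[OF P(1)] by simp
      have Pm: "P \<subseteq> m" by (rule below_m[OF iP PnC])
      have Pnm: "P \<noteq> m" using P(3) x by blast
      have Pmin: "Q' = P" if Q': "primeideal Q' R" "Q' \<subseteq> P" for Q'
      proof (rule ccontr)
        assume "Q' \<noteq> P"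
        define ch where "ch = (\<lambda>i::nat. if i = 0 then Q' else if i = 1 then P else m)"
        have "prime_chain R 2" unfolding prime_chain_def
        proof (intro exI[of _ ch] conjI allI impI)
          fix i :: nat assume "i \<le> 2"
          then show "primeideal (ch i) R" unfolding ch_def using Q'(1) P(1) mprime by auto
        next
          fix i :: nat assume "i < 2"
          then have "i = 0 \<or> i = 1" by auto
          then show "ch i \<subset> ch (Suc i)" unfolding ch_def
            using Q'(2) \<open>Q' \<noteq> P\<close> Pm Pnm by auto
        qed
        then show False using kd unfolding krull_dim_one_def by simp
      qed
      have A0P: "A0 \<subseteq> P" using A0I IQ P(2) by blast
      obtain s t where s: "s \<in> carrier R - P" "\<forall>z\<in>ideal_pow R (Idl A0) t. s \<otimes> z = \<zero>"
        using pow_annih[OF N P(1) Pmin A0(2) A0P] by blast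
      have "s \<in> annih (ideal_pow R I t)" unfolding annih_def A0(3) using s by blast
      then have "s \<in> P" using Kbig KQ P(2) by blast
      then show False using s by blast
    qed
    have "primary_to R m Q" unfolding primary_to_def
    proof
      show "primary_ideal Q R" unfolding primary_ideal_def
      proof (intro conjI ballI impI)
        show "ideal Q R" by (rule iQ)
        show "Q \<noteq> carrier R" by (rule False)
        fix a b assume a: "a \<in> carrier R" and b: "b \<in> carrier R" and ab: "a \<otimes>\<^bsub>R\<^esub> b \<in> Q"
        show "a \<in> Q \<or> (\<exists>k::nat. b [^]\<^bsub>R\<^esub> k \<in> Q)"
        proof (cases "b \<in> m")
          case True then show ?thesis using rad by blast
        next
          case bm: False
          have ib: "ideal (PIdl b) R" by (rule cgenideal_ideal[OF b])
          have "PIdl b = carrier R"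
          proof (rule ccontr)
            assume "PIdl b \<noteq> carrier R"
            then have "PIdl b \<subseteq> m" by (rule below_m[OF ib])
            then show False using cgenideal_self[OF b] bm by blast
          qed
          then have "\<one> \<in> PIdl b" by simp
          then obtain c where c: "c \<in> carrier R" "\<one> = c \<otimes> b" unfolding cgenideal_def by blast
          have "a = c \<otimes> (a \<otimes> b)"
          proof -
            have "a = a \<otimes> \<one>" using a by simp
            also have "\<dots> = a \<otimes> (c \<otimes> b)" using c(2) by simp
            also have "\<dots> = c \<otimes> (a \<otimes> b)" using a b c(1) by (simp add: m_ac)
            finally show ?thesis .
          qed
          moreover have "c \<otimes> (a \<otimes> b) \<in> Q" by (rule ideal.I_l_closed[OF iQ ab c(1)])
          ultimately show ?thesis by simp
        qed
      qed
    next
      show "ideal_radical R Q = m"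
      proof
        show "ideal_radical R Q \<subseteq> m"
        proof
          fix x assume "x \<in> ideal_radical R Q"
          then obtain k :: nat where x: "x \<in> carrier R" "x [^] k \<in> Q" unfolding ideal_radical_def by blast
          then have "x [^] k \<in> m" using Qm by blast
          then show "x \<in> m" by (rule prime_pow[OF mprime x(1)])
        qed
        show "m \<subseteq> ideal_radical R Q"
        proof
          fix x assume x: "x \<in> m"
          have xc: "x \<in> carrier R" by (rule ideal.Icarr[OF im x])
          show "x \<in> ideal_radical R Q" unfolding ideal_radical_def using rad[OF x] xc by blast
        qed
      qed
    qed
    then show ?thesis using hyp by blast
  qed
  then obtain J A s where J: "A \<subseteq> carrier R" "finite A" "card A \<le> n" "J = Idl A"
      and iJ: "ideal J R" and JQ: "J \<subseteq> Q" and s: "s > 0"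
      and red: "ideal_pow R Q (Suc s) = ideal_prod R J (ideal_pow R Q s)"
    unfolding n_generated_def is_reduction_def by blast
  have "\<forall>a\<in>A. \<exists>i. i \<in> I \<and> (\<exists>k\<in>K. a = i \<oplus> k)"
  proof
    fix a assume "a \<in> A"
    then have "a \<in> Q" using genideal_self[OF J(1)] J(4) JQ by blast
    then show "\<exists>i. i \<in> I \<and> (\<exists>k\<in>K. a = i \<oplus> k)" unfolding Q_def set_add_def' by blast
  qed
  then obtain f where f: "\<forall>a\<in>A. f a \<in> I \<and> (\<exists>k\<in>K. a = f a \<oplus> k)"
    using bchoice[of A "\<lambda>a i. i \<in> I \<and> (\<exists>k\<in>K. a = i \<oplus> k)"] by blast
  define A' where "A' = f ` A"
  have A'I: "A' \<subseteq> I" unfolding A'_def using f by blast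
  have A'c: "A' \<subseteq> carrier R" using A'I Ic by (rule subset_trans)
  define J' where "J' = Idl A'"
  have iJ': "ideal J' R" unfolding J'_def by (rule genideal_ideal[OF A'c])
  have J'I: "J' \<subseteq> I" unfolding J'_def by (rule genideal_minimal[OF I A'I])
  have ngen: "n_generated R n J'" unfolding n_generated_def
  proof (intro exI[of _ A'] conjI)
    show "A' \<subseteq> carrier R" by (rule A'c)
    show "finite A'" unfolding A'_def using J(2) by simp
    have "card A' \<le> card A" unfolding A'_def by (rule card_image_le[OF J(2)])
    then show "card A' \<le> n" using J(3) by simp
    show "J' = Idl A'" by (simp add: J'_def)
  qed
  have iJK: "ideal (set_add R J' K) R" by (rule add_ideals[OF iJ' iK])
  have "A \<subseteq> set_add R J' K"
  proof
    fix a assume a: "a \<in> A"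
    obtain k where k: "k \<in> K" "a = f a \<oplus> k" using f a by blast
    have "f a \<in> A'" unfolding A'_def using a by simp
    then have fa: "f a \<in> J'" unfolding J'_def using genideal_self[OF A'c] by blast
    have "f a \<oplus> k \<in> set_add R J' K" unfolding set_add_def'
      by (rule UN_I[OF fa], rule UN_I[OF k(1)], simp)
    then show "a \<in> set_add R J' K" using k(2) by simp
  qed
  then have JJ: "J \<subseteq> set_add R J' K" unfolding J(4) by (rule genideal_minimal[OF iJK])
  let ?T = "set_add R (ideal_prod R J' (ideal_pow R I s)) K"
  have iT: "ideal ?T R" by (rule add_ideals[OF ideal_prod_is_ideal[OF iJ' ipow_ideal[OF I]] iK])
  have step1: "ideal_pow R I (Suc s) \<subseteq> ?T"
  proof -
    have "ideal_pow R I (Suc s) \<subseteq> ideal_pow R Q (Suc s)" by (rule ipow_mono_ideal[OF IQ])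
    also have "\<dots> = ideal_prod R J (ideal_pow R Q s)" by (rule red)
    also have "\<dots> \<subseteq> ideal_prod R (set_add R J' K) (ideal_pow R Q s)" by (rule iprod_mono_l[OF JJ])
    also have "\<dots> = set_add R (ideal_prod R J' (ideal_pow R Q s)) (ideal_prod R K (ideal_pow R Q s))"
      by (rule ideal_prod_distr(2)[OF ipow_ideal[OF iQ] iJ' iK])
    also have "\<dots> \<subseteq> ?T"
    proof (rule sadd_sub[OF iT])
      have "ideal_prod R J' (ideal_pow R Q s) \<subseteq> ideal_prod R J' (set_add R (ideal_pow R I s) K)"
        unfolding Q_def by (rule iprod_mono_r[OF sum_pow[OF I iK]])
      also have "\<dots> = set_add R (ideal_prod R J' (ideal_pow R I s)) (ideal_prod R J' K)"
        by (rule ideal_prod_distr(1)[OF iJ' ipow_ideal[OF I] iK])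
      also have "\<dots> \<subseteq> ?T"
      proof (rule sadd_mono[OF subset_refl])
        show "ideal_prod R J' K \<subseteq> K" using ideal_prod_inter[OF iJ' iK] by blast
      qed
      finally show "ideal_prod R J' (ideal_pow R Q s) \<subseteq> ?T" .
      have "ideal_prod R K (ideal_pow R Q s) \<subseteq> K" using ideal_prod_inter[OF iK ipow_ideal[OF iQ]] by blast
      also have "K \<subseteq> ?T" by (rule sadd_upper(2)[OF ideal_prod_is_ideal[OF iJ' ipow_ideal[OF I]] iK])
      finally show "ideal_prod R K (ideal_pow R Q s) \<subseteq> ?T" .
    qed
    finally show ?thesis .
  qed
  have iU: "ideal (ideal_pow R I u) R" by (rule ipow_ideal[OF I])
  have iS: "ideal (ideal_pow R I s) R" by (rule ipow_ideal[OF I])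
  have iW: "ideal (ideal_prod R J' (ideal_pow R I (u + s))) R"
    by (rule ideal_prod_is_ideal[OF iJ' ipow_ideal[OF I]])
  have UK: "ideal_prod R (ideal_pow R I u) K \<subseteq> {\<zero>}"
  proof (rule iprod_zero)
    fix i k assume i: "i \<in> ideal_pow R I u" and k: "k \<in> K"
    have ic: "i \<in> carrier R" by (rule ideal.Icarr[OF iU i])
    have kc: "k \<in> carrier R" by (rule ideal.Icarr[OF iK k])
    have "k \<otimes> i = \<zero>" using k i unfolding K_def annih_def by blast
    then show "i \<otimes> k = \<zero>" using m_comm[OF ic kc] by simp
  qed
  have comm: "ideal_prod R (ideal_pow R I u) (ideal_prod R J' (ideal_pow R I s)) = ideal_prod R J' (ideal_pow R I (u + s))"
  proof -
    have "ideal_prod R (ideal_pow R I u) (ideal_prod R J' (ideal_pow R I s))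
        = ideal_prod R (ideal_prod R (ideal_pow R I u) J') (ideal_pow R I s)"
      by (rule ideal_prod_assoc[OF iU iJ' iS, symmetric])
    also have "\<dots> = ideal_prod R (ideal_prod R J' (ideal_pow R I u)) (ideal_pow R I s)"
      by (simp add: ideal_prod_commute[OF iU iJ'])
    also have "\<dots> = ideal_prod R J' (ideal_prod R (ideal_pow R I u) (ideal_pow R I s))"
      by (rule ideal_prod_assoc[OF iJ' iU iS])
    also have "\<dots> = ideal_prod R J' (ideal_pow R I (u + s))" by (simp add: ipow_add[OF I])
    finally show ?thesis .
  qed
  have eq: "ideal_pow R I (Suc (u + s)) = ideal_prod R J' (ideal_pow R I (u + s))"
  proof
    have "ideal_pow R I (Suc (u + s)) = ideal_pow R I (u + Suc s)" by simp
    also have "\<dots> = ideal_prod R (ideal_pow R I u) (ideal_pow R I (Suc s))" by (rule ipow_add[OF I])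
    also have "\<dots> \<subseteq> ideal_prod R (ideal_pow R I u) ?T" by (rule iprod_mono_r[OF step1])
    also have "\<dots> = set_add R (ideal_prod R (ideal_pow R I u) (ideal_prod R J' (ideal_pow R I s))) (ideal_prod R (ideal_pow R I u) K)"
      by (rule ideal_prod_distr(1)[OF iU ideal_prod_is_ideal[OF iJ' iS] iK])
    also have "\<dots> \<subseteq> ideal_prod R J' (ideal_pow R I (u + s))"
    proof (rule sadd_sub[OF iW])
      show "ideal_prod R (ideal_pow R I u) (ideal_prod R J' (ideal_pow R I s)) \<subseteq> ideal_prod R J' (ideal_pow R I (u + s))"
        using comm by simp
      have "\<zero> \<in> ideal_prod R J' (ideal_pow R I (u + s))"
        by (rule additive_subgroup.zero_closed[OF ideal.axioms(1)[OF iW]])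
      then show "ideal_prod R (ideal_pow R I u) K \<subseteq> ideal_prod R J' (ideal_pow R I (u + s))"
        using UK by blast
    qed
    finally show "ideal_pow R I (Suc (u + s)) \<subseteq> ideal_prod R J' (ideal_pow R I (u + s))" .
  next
    show "ideal_prod R J' (ideal_pow R I (u + s)) \<subseteq> ideal_pow R I (Suc (u + s))"
      using iprod_mono_l[OF J'I, of "ideal_pow R I (u + s)"] by simp
  qed
  have "is_reduction R J' I" unfolding is_reduction_def
  proof (intro conjI exI[of _ "u + s"])
    show "ideal J' R" by (rule iJ')
    show "J' \<subseteq> I" by (rule J'I)
    show "u + s > 0" using s by simp
    show "ideal_pow R I (Suc (u + s)) = ideal_prod R J' (ideal_pow R I (u + s))" by (rule eq)
  qed
  then show ?thesis using ngen by blast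
qed

end

theorem proposition2p2:
  fixes R :: "('a, 'b) ring_scheme" and m :: "'a set" and n :: nat
  assumes "noetherian_ring R"
    and "local_ring R m"
    and "krull_dim_one R"
    and "n > 0"
    and "\<forall>Q. primary_to R m Q \<longrightarrow> (\<exists>J. n_generated R n J \<and> is_reduction R J Q)"
  shows "\<forall>I. ideal I R \<longrightarrow> (\<exists>J. n_generated R n J \<and> is_reduction R J I)"
proof (intro allI impI)
  fix I assume I: "ideal I R"
  have cr: "cring R" using assms(2) unfolding local_ring_def by simp
  show "\<exists>J. n_generated R n J \<and> is_reduction R J I"
    by (rule cring.main_reduction[OF cr assms I])
qed

end
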